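(* Under the hypotheses below, let $X$ be a process as described, fix $\alpha>0$, and for $A\subset\mathbb R^d$ set $\mathrm{Cap}^\alpha_{(\mu_t)}(A):=\inf\{\mathbb E_{\delta_0\otimes\mu_0}\{e^{-\alpha D^{(2)}_G}\}:A\subset G,\ G\subset\mathbb R^d\text{ open}\}$, where $D^{(2)}_G:=\inf\{t\ge0:X_2(t)\in G\}$. Then $\mathrm{Cap}^\alpha_{(\mu_t)}$ is a Choquet capacity on $\mathbb R^d$ endowed with the norm topology, and it is tight.
   Context: Setting: coefficients $b(t,x,\nu)\in\mathbb R^d$, $a(t,x,\nu)$ symmetric nonnegative definite on $[0,\infty)\times\mathbb R^d\times\mathcal P(\mathbb R^d)$; $L_{t,\nu}f=\langle b(t,x,\nu),\nabla_xf\rangle+\frac12\sum a_{ij}(t,x,\nu)\partial_{x_i}\partial_{x_j}f$. $\mu=(\mu_t)_{t\ge0}\subset\mathcal P(\mathbb R^d)$ is a weakly continuous solution of the nonlinear Fokker–Planck equation $\partial_t\mu_t=L^*_{t,\mu_t}\mu_t$ (in the distributional sense, with Borel frozen coefficients $b^u(t,x)=b(t,x,\mu_t)$, $a^u(t,x)=a(t,x,\mu_t)$ locally integrable against $\mu_t dt$), $\mu_t=u(t,x)dx$ with $u$ jointly measurable, and the linearized hypotheses hold: for $N,r>0$, $\partial_{x_j}a^u_{ij},b^u\in L^2([0,N)\times B(0,r);u\,dt\,dx)$, $a^u$ uniformly elliptic and bounded on $[0,N)\times B(0,r)$, $uh\in L^\infty([0,N)\times\mathbb R^d)$ and $\sqrt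 uh\in L^2([0,N);H^1)$ for $h\in C_c^\infty(\mathbb R^d)$; uniqueness for the frozen linear equation among sub-probability solutions dominated by $u$ starting from $\mu_s$ (weakly right-continuous, vaguely left-continuous) and among weakly continuous probability solutions dominated by $cu$ with a given initial value; $u(t,\cdot)\to u(0,\cdot)$ in $L^1$ and $L^1$-continuity at $0$ of the dominated solutions started from a measure-separating family of densities. Under these hypotheses there exist $E\in\mathcal B([0,\infty)\times\mathbb R^d)$ with $\mu_s(\{x:(s,x)\in E\})=1$ for all $s\ge0$ and a conservative right process $X=(X_1,X_2)$ on $E$ with a.s. continuous paths, $X_1(t)=s+t$ a.s. under $\mathbb P_{s,x}$, and $\mathbb P_{s,\mu_s}\circ X_2(t)^{-1}=\mu_{s+t}$; $X$ is such a process, with $\mathbb P_{\delta_0\otimes\mu_0}=\int\mathbb P_{0,x}\mu_0(dx)$. A Choquet capacity on a topological space $F$ is a map $\mathrm{Cap}$ from all subsets of $F$ to $[0,\infty]$ with: $\mathrm{Cap}(K)<\infty$ for compact $K$; monotone; $\mathrm{Cap}(A_n)\uparrow\mathrm{Cap}(A)$ when $A_n\uparrow A$; $\mathrm{Cap}(K_n)\downarrow\mathrm{Cap}(A)$ when compact $K_n\downarrow A$. It is tight if there are compacts $K_n$ increasing with $\inf_n\mathrm{Cap}(F\setminus K_n)=0$. *)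

theory Defs
  imports "HOL-Probability.Probability"
begin

definition choquet_capacity :: "('a::topological_space set \<Rightarrow> ennreal) \<Rightarrow> bool" where
  "choquet_capacity Cap \<longleftrightarrow>
     (\<forall>K. compact K \<longrightarrow> Cap K < \<infinity>) \<and>
     (\<forall>A B. A \<subseteq> B \<longrightarrow> Cap A \<le> Cap B) \<and>
     (\<forall>An A. incseq An \<and> (\<Union>n. An n) = A \<longrightarrow>
        incseq (\<lambda>n. Cap (An n)) \<and> (\<lambda>n. Cap (An n)) \<longlonglongrightarrow> Cap A) \<and>
     (\<forall>Kn A. (\<forall>n. compact (Kn n)) \<and> decseq Kn \<and> (\<Inter>n. Kn n) = A \<longrightarrow>
        decseq (\<lambda>n. Cap (Kn n)) \<and> (\<lambda>n. Cap (Kn n)) \<longlonglongrightarrow> Cap A)"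

definition tight_capacity :: "('a::topological_space set \<Rightarrow> ennreal) \<Rightarrow> bool" where
  "tight_capacity Cap \<longleftrightarrow>
     (\<exists>Kn. (\<forall>n. compact (Kn n)) \<and> incseq Kn \<and> (INF n. Cap (UNIV - Kn n)) = 0)"

text \<open>First hitting time D_G = inf{t \<ge> 0 : X2(t) \<in> G}, valued in the extended reals
  (infimum of the empty set is +\<infinity>).\<close>
definition hitting_time :: "(real \<Rightarrow> 'w \<Rightarrow> 'a) \<Rightarrow> 'a set \<Rightarrow> 'w \<Rightarrow> ereal" where
  "hitting_time X2 G \<omega> = Inf {ereal t | t. 0 \<le> t \<and> X2 t \<omega> \<in> G}"

definition exp_neg :: "real \<Rightarrow> ereal \<Rightarrow> ennreal" where
  "exp_neg \<alpha> D = (if D = \<infinity> then 0 else ennreal (exp (- \<alpha> * real_of_ereal D)))"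

definition cap_alpha :: "real \<Rightarrow> 'w measure \<Rightarrow> (real \<Rightarrow> 'w \<Rightarrow> 'a::topological_space) \<Rightarrow> 'a set \<Rightarrow> ennreal" where
  "cap_alpha \<alpha> P X2 A = (INF G \<in> {G. open G \<and> A \<subseteq> G}. \<integral>\<^sup>+ \<omega>. exp_neg \<alpha> (hitting_time X2 G \<omega>) \<partial>P)"

definition weakly_continuous_flow :: "(real \<Rightarrow> 'a::euclidean_space measure) \<Rightarrow> bool" where
  "weakly_continuous_flow \<mu> \<longleftrightarrow>
     (\<forall>f::'a \<Rightarrow> real. continuous_on UNIV f \<and> bounded (range f) \<longrightarrow>
        continuous_on {0..} (\<lambda>t. \<integral>x. f x \<partial>\<mu> t))"

end

theory Submission
  imports Defs
begin


lemma half_sum: "(\<Sum>k\<le>n. (1/2::real)^Suc k) = 1 - (1/2)^Suc n"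
  by (induction n) (auto simp: field_simps)

lemma cap_up:
  fixes \<psi> :: "'a::topological_space set \<Rightarrow> ennreal"
  assumes bnd: "\<And>G. open G \<Longrightarrow> \<psi> G \<le> 1"
  and ssub: "\<And>G H. open G \<Longrightarrow> open H \<Longrightarrow> \<psi> (G \<union> H) + \<psi> (G \<inter> H) \<le> \<psi> G + \<psi> H"
  and cont: "\<And>Gs. (\<And>n. open (Gs n)) \<Longrightarrow> incseq Gs \<Longrightarrow> \<psi> (\<Union>n. Gs n) \<le> (SUP n. \<psi> (Gs n))"
  and An: "incseq An"
  defines "C \<equiv> (\<lambda>A. INF G\<in>{G. open G \<and> A \<subseteq> G}. \<psi> G)"
  shows "C (\<Union>n. An n) \<le> (SUP n. C (An n))"
proof (rule ennreal_le_epsilon)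
  fix e :: real assume e: "0 < e"
  have Cfin: "C A \<le> 1" for A
  proof -
    have "C A \<le> \<psi> UNIV" unfolding C_def by (rule INF_lower) simp
    then show ?thesis using bnd[of UNIV] by (rule order_trans) simp
  qed
  define d where "d n = e * (1/2)^Suc n" for n
  have dpos: "d n > 0" for n using e by (simp add: d_def)
  have "\<exists>G. open G \<and> An n \<subseteq> G \<and> \<psi> G \<le> C (An n) + ennreal (d n)" for n
  proof -
    have fin: "C (An n) \<noteq> \<infinity>" using le_less_trans[OF Cfin[of "An n"] ennreal_one_less_top] by simp
    have "C (An n) + 0 < C (An n) + ennreal (d n)"
      unfolding ennreal_add_left_cancel_less using fin dpos[of n] by simp
    then have "C (An n) < C (An n) + ennreal (d n)" by simp
    then obtain G where "G \<in> {G. open G \<and> An n \<subseteq> G}" "\<psi> G < C (An n) + ennreal (d n)"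
      unfolding C_def by (subst (asm) INF_less_iff) auto
    then show ?thesis by (intro exI[of _ G]) auto
  qed
  then obtain G where G: "\<And>n. open (G n)" "\<And>n. An n \<subseteq> G n" "\<And>n. \<psi> (G n) \<le> C (An n) + ennreal (d n)"
    by metis
  define H where "H n = (\<Union>k\<le>n. G k)" for n
  have Hopen: "open (H n)" for n unfolding H_def using G(1) by auto
  have Hinc: "incseq H" unfolding H_def by (rule monoI, rule UN_mono) auto
  have AnH: "An n \<subseteq> H n" for n
  proof -
    have "G n \<subseteq> H n" unfolding H_def by blast
    with G(2)[of n] show ?thesis by (rule order_trans)
  qed
  have Hb: "\<psi> (H n) \<le> C (An n) + ennreal (\<Sum>k\<le>n. d k)" for n
  proof (induction n)
    case 0 then show ?case using G(3)[of 0] by (simp add: H_def)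
  next
    case (Suc n)
    have HS: "H (Suc n) = H n \<union> G (Suc n)" unfolding H_def by (auto simp: atMost_Suc)
    have low: "C (An n) \<le> \<psi> (H n \<inter> G (Suc n))"
      unfolding C_def using Hopen[of n] G(1)[of "Suc n"] AnH[of n] G(2)[of "Suc n"] An[unfolded incseq_def, rule_format, of n "Suc n"]
      by (intro INF_lower) auto
    have "C (An n) + \<psi> (H (Suc n)) \<le> \<psi> (H (Suc n)) + \<psi> (H n \<inter> G (Suc n))"
      using low by (simp add: add.commute add_left_mono)
    also have "\<dots> \<le> \<psi> (H n) + \<psi> (G (Suc n))" unfolding HS by (rule ssub[OF Hopen G(1)])
    also have "\<dots> \<le> (C (An n) + ennreal (\<Sum>k\<le>n. d k)) + (C (An (Suc n)) + ennreal (d (Suc n)))"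
      by (intro add_mono Suc.IH G(3))
    also have "\<dots> = C (An n) + (C (An (Suc n)) + ennreal (\<Sum>k\<le>Suc n. d k))"
    proof -
      have "ennreal (\<Sum>k\<le>Suc n. d k) = ennreal (\<Sum>k\<le>n. d k) + ennreal (d (Suc n))"
        using dpos by (simp add: ennreal_plus sum_nonneg less_imp_le)
      then show ?thesis by (simp add: add_ac)
    qed
    finally have "C (An n) + \<psi> (H (Suc n)) \<le> C (An n) + (C (An (Suc n)) + ennreal (\<Sum>k\<le>Suc n. d k))" .
    moreover have "C (An n) \<noteq> \<infinity>" using le_less_trans[OF Cfin[of "An n"] ennreal_one_less_top] by simp
    ultimately show ?case by (simp add: ennreal_add_left_cancel_le)
  qed
  have sd: "(\<Sum>k\<le>n. d k) \<le> e" for n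
  proof -
    have "(\<Sum>k\<le>n. d k) = e * (\<Sum>k\<le>n. (1/2::real)^Suc k)" unfolding d_def by (simp add: sum_distrib_left)
    also have "\<dots> = e * (1 - (1/2)^Suc n)" by (simp only: half_sum)
    also have "\<dots> \<le> e"
    proof (rule mult_left_le)
      show "1 - (1/2::real)^Suc n \<le> 1" by simp
    qed (use e in simp)
    finally show ?thesis .
  qed
  have "C (\<Union>n. An n) \<le> \<psi> (\<Union>n. H n)"
    unfolding C_def
  proof (rule INF_lower, safe)
    show "open (\<Union>n. H n)" using Hopen by (intro open_UN) simp
    fix x n assume "x \<in> An n" then show "x \<in> (\<Union>n. H n)" using AnH[of n] by blast
  qed
  also have "\<dots> \<le> (SUP n. \<psi> (H n))" by (rule cont[OF Hopen Hinc])
  also have "\<dots> \<le> (SUP n. C (An n)) + ennreal e"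
  proof (rule SUP_least)
    fix n
    have "\<psi> (H n) \<le> C (An n) + ennreal e"
    proof -
      have "C (An n) + ennreal (\<Sum>k\<le>n. d k) \<le> C (An n) + ennreal e"
        by (rule add_left_mono) (rule ennreal_leI[OF sd])
      then show ?thesis using Hb[of n] by (rule order_trans[rotated])
    qed
    also have "\<dots> \<le> (SUP n. C (An n)) + ennreal e" by (intro add_right_mono SUP_upper) auto
    finally show "\<psi> (H n) \<le> (SUP n. C (An n)) + ennreal e" .
  qed
  finally show "C (\<Union>n. An n) \<le> (SUP n. C (An n)) + ennreal e" .
qed

lemma compact_dec_sub_open:
  fixes K :: "nat \<Rightarrow> 'a::t2_space set"
  assumes "\<And>n. compact (K n)" "decseq K" "open G" "(\<Inter>n. K n) \<subseteq> G"
  shows "\<exists>n. K n \<subseteq> G"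
proof (rule ccontr)
  assume "\<not> ?thesis"
  then have ne: "K n - G \<noteq> {}" for n by auto
  have cl: "closed (K n - G)" for n using assms(1,3) by (intro closed_Diff compact_imp_closed) auto
  have "K 0 \<inter> \<Inter>(range (\<lambda>n. K n - G)) \<noteq> {}"
  proof (rule compact_imp_fip[OF assms(1)[of 0]])
    show "\<And>T. T \<in> range (\<lambda>n. K n - G) \<Longrightarrow> closed T" using cl by auto
    fix F' assume F': "finite F'" "F' \<subseteq> range (\<lambda>n. K n - G)"
    then obtain N where N: "finite N" "F' = (\<lambda>n. K n - G) ` N"
      by (metis finite_subset_image)
    define m where "m = Max (insert 0 N)"
    have Km: "K m \<subseteq> K n" if "n \<in> insert 0 N" for n
    proof -
      have "n \<le> m" unfolding m_def using N(1) that by (intro Max_ge) auto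
      then show ?thesis by (rule decseqD[OF assms(2)])
    qed
    have "K m - G \<subseteq> K 0 \<inter> \<Inter>F'"
      using Km N(2) by auto
    then show "K 0 \<inter> \<Inter>F' \<noteq> {}" using ne[of m] by blast
  qed
  then show False using assms(4) by auto
qed

lemma cap_choquet:
  fixes \<psi> :: "'a::t2_space set \<Rightarrow> ennreal"
  assumes bnd: "\<And>G. open G \<Longrightarrow> \<psi> G \<le> 1"
  and ssub: "\<And>G H. open G \<Longrightarrow> open H \<Longrightarrow> \<psi> (G \<union> H) + \<psi> (G \<inter> H) \<le> \<psi> G + \<psi> H"
  and cont: "\<And>Gs. (\<And>n. open (Gs n)) \<Longrightarrow> incseq Gs \<Longrightarrow> \<psi> (\<Union>n. Gs n) \<le> (SUP n. \<psi> (Gs n))"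
  shows "choquet_capacity (\<lambda>A. INF G\<in>{G. open G \<and> A \<subseteq> G}. \<psi> G)"
proof -
  define C where "C = (\<lambda>A. INF G\<in>{G. open G \<and> A \<subseteq> G}. \<psi> G)"
  have Cfin: "C A \<le> 1" for A
  proof -
    have "C A \<le> \<psi> UNIV" unfolding C_def by (rule INF_lower) simp
    then show ?thesis using bnd[of UNIV] by (rule order_trans) simp
  qed
  have Cmono: "A \<subseteq> B \<Longrightarrow> C A \<le> C B" for A B
    unfolding C_def by (intro INF_superset_mono) auto
  have up: "incseq (\<lambda>n. C (An n)) \<and> (\<lambda>n. C (An n)) \<longlonglongrightarrow> C A" if "incseq An" "(\<Union>n. An n) = A" for An A
  proof -
    have inc: "incseq (\<lambda>n. C (An n))" using that(1) Cmono unfolding incseq_def by blast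
    have "(SUP n. C (An n)) = C A"
    proof (rule antisym)
      show "(SUP n. C (An n)) \<le> C A"
      proof (rule SUP_least)
        fix n show "C (An n) \<le> C A" using that(2) by (intro Cmono) blast
      qed
      have "C (\<Union>n. An n) \<le> (SUP n. C (An n))"
        unfolding C_def by (rule cap_up[where \<psi>=\<psi> and An=An, OF bnd ssub cont that(1)])
      then show "C A \<le> (SUP n. C (An n))" using that(2) by simp
    qed
    with inc LIMSEQ_SUP[OF inc] show ?thesis by simp
  qed
  have down: "decseq (\<lambda>n. C (Kn n)) \<and> (\<lambda>n. C (Kn n)) \<longlonglongrightarrow> C A"
    if "\<forall>n. compact (Kn n)" "decseq Kn" "(\<Inter>n. Kn n) = A" for Kn A
  proof -
    have dec: "decseq (\<lambda>n. C (Kn n))" using that(2) Cmono unfolding decseq_def by blast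
    have "(INF n. C (Kn n)) = C A"
    proof (rule antisym)
      show "C A \<le> (INF n. C (Kn n))"
      proof (rule INF_greatest)
        fix n show "C A \<le> C (Kn n)" using that(3) by (intro Cmono) blast
      qed
      show "(INF n. C (Kn n)) \<le> C A"
        unfolding C_def[THEN fun_cong, of A]
      proof (rule INF_greatest)
        fix G assume G: "G \<in> {G. open G \<and> A \<subseteq> G}"
        have "\<exists>n. Kn n \<subseteq> G"
        proof (rule compact_dec_sub_open)
          show "\<And>n. compact (Kn n)" using that(1) by blast
          show "decseq Kn" by (rule that(2))
          show "open G" using G by blast
          show "(\<Inter>n. Kn n) \<subseteq> G" using G that(3) by blast
        qed
        then obtain n where n: "Kn n \<subseteq> G" by blast
        have "C (Kn n) \<le> \<psi> G" unfolding C_def by (rule INF_lower) (use G n in blast)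
        then show "(INF n. C (Kn n)) \<le> \<psi> G" by (meson INF_lower2 UNIV_I)
      qed
    qed
    with dec LIMSEQ_INF[OF dec] show ?thesis by simp
  qed
  show ?thesis
    unfolding choquet_capacity_def C_def[symmetric]
  proof (intro conjI)
    show "\<forall>K. compact K \<longrightarrow> C K < \<infinity>"
    proof (intro allI impI)
      fix K :: "'a set" show "C K < \<infinity>" using le_less_trans[OF Cfin[of K] ennreal_one_less_top] by simp
    qed
    show "\<forall>A B. A \<subseteq> B \<longrightarrow> C A \<le> C B" using Cmono by blast
    show "\<forall>An A. incseq An \<and> \<Union> (range An) = A \<longrightarrow> incseq (\<lambda>n. C (An n)) \<and> (\<lambda>n. C (An n)) \<longlonglongrightarrow> C A"
      using up by blast
    show "\<forall>Kn A. (\<forall>n. compact (Kn n)) \<and> decseq Kn \<and> \<Inter> (range Kn) = A \<longrightarrow> decseq (\<lambda>n. C (Kn n)) \<and> (\<lambda>n. C (Kn n)) \<longlonglongrightarrow> C A"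
      using down by blast
  qed
qed

lemma cap_tight:
  fixes \<psi> :: "'a::euclidean_space set \<Rightarrow> ennreal"
  assumes "(INF n. \<psi> (UNIV - cball 0 (real n))) = 0"
  shows "tight_capacity (\<lambda>A. INF G\<in>{G. open G \<and> A \<subseteq> G}. \<psi> G)"
  unfolding tight_capacity_def
proof (intro exI[of _ "\<lambda>n. cball 0 (real n)"] conjI allI)
  show "incseq (\<lambda>n. cball (0::'a) (real n))" by (auto simp: incseq_def)
  have "(INF n. INF G\<in>{G. open G \<and> UNIV - cball 0 (real n) \<subseteq> G}. \<psi> G) \<le> (INF n. \<psi> (UNIV - cball 0 (real n)))"
  proof (intro INF_mono)
    fix m show "\<exists>n\<in>UNIV. (INF G\<in>{G. open G \<and> UNIV - cball 0 (real n) \<subseteq> G}. \<psi> G) \<le> \<psi> (UNIV - cball 0 (real m))"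
      by (intro bexI[of _ m] INF_lower) auto
  qed
  then show "(INF n. INF G\<in>{G. open G \<and> UNIV - cball 0 (real n) \<subseteq> G}. \<psi> G) = 0"
    using assms by simp
qed auto



definition gQ :: "real \<Rightarrow> (real \<Rightarrow> 'w \<Rightarrow> 'a) \<Rightarrow> 'a set \<Rightarrow> 'w \<Rightarrow> ennreal" where
  "gQ \<alpha> X2 G \<omega> = (SUP q \<in> (\<rat> \<inter> {0..}). if X2 q \<omega> \<in> G then ennreal (exp (- \<alpha> * q)) else 0)"

lemma gQ_le_1: "\<alpha> > 0 \<Longrightarrow> gQ \<alpha> X2 G \<omega> \<le> 1"
  unfolding gQ_def by (intro SUP_least) auto

lemma gQ_mono: "G \<subseteq> H \<Longrightarrow> gQ \<alpha> X2 G \<omega> \<le> gQ \<alpha> X2 H \<omega>"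
  unfolding gQ_def by (intro SUP_mono') auto

lemma gQ_union: "gQ \<alpha> X2 (G \<union> H) \<omega> \<le> sup (gQ \<alpha> X2 G \<omega>) (gQ \<alpha> X2 H \<omega>)"
  unfolding gQ_def
proof (intro SUP_least)
  fix q :: real assume q: "q \<in> \<rat> \<inter> {0..}"
  show "(if X2 q \<omega> \<in> G \<union> H then ennreal (exp (- \<alpha> * q)) else 0)
     \<le> sup (SUP q \<in> (\<rat> \<inter> {0..}). if X2 q \<omega> \<in> G then ennreal (exp (- \<alpha> * q)) else 0)
            (SUP q \<in> (\<rat> \<inter> {0..}). if X2 q \<omega> \<in> H then ennreal (exp (- \<alpha> * q)) else 0)"
  proof (cases "X2 q \<omega> \<in> G")
    case True then show ?thesis using q
      by (intro le_supI1) (rule SUP_upper2[of q], auto)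
  next
    case False then show ?thesis using q
      by (intro le_supI2) (rule SUP_upper2[of q], auto)
  qed
qed

lemma gQ_Union: "gQ \<alpha> X2 (\<Union>n. Gs n) \<omega> \<le> (SUP n. gQ \<alpha> X2 (Gs n) \<omega>)"
  unfolding gQ_def
proof (intro SUP_least)
  fix q :: real assume q: "q \<in> \<rat> \<inter> {0..}"
  show "(if X2 q \<omega> \<in> (\<Union>n. Gs n) then ennreal (exp (- \<alpha> * q)) else 0)
     \<le> (SUP n. SUP q \<in> (\<rat> \<inter> {0..}). if X2 q \<omega> \<in> Gs n then ennreal (exp (- \<alpha> * q)) else 0)"
  proof (cases "X2 q \<omega> \<in> (\<Union>n. Gs n)")
    case True
    then obtain n where n: "X2 q \<omega> \<in> Gs n" by auto
    have 2: "ennreal (exp (- \<alpha> * q)) \<le> (SUP q \<in> (\<rat> \<inter> {0..}). if X2 q \<omega> \<in> Gs n then ennreal (exp (- \<alpha> * q)) else 0)"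
      by (rule SUP_upper2[of q]) (use q n in simp_all)
    have 3: "(SUP q \<in> (\<rat> \<inter> {0..}). if X2 q \<omega> \<in> Gs n then ennreal (exp (- \<alpha> * q)) else 0)
      \<le> (SUP n. SUP q \<in> (\<rat> \<inter> {0..}). if X2 q \<omega> \<in> Gs n then ennreal (exp (- \<alpha> * q)) else 0)"
      by (rule SUP_upper) simp
    show ?thesis using True order_trans[OF 2 3] by simp
  qed auto
qed

lemma gQ_meas:
  assumes "\<And>q. X2 q \<in> measurable M borel" "G \<in> sets borel"
  shows "(\<lambda>\<omega>. gQ \<alpha> X2 G \<omega>) \<in> borel_measurable M"
  unfolding gQ_def
proof (rule borel_measurable_SUP)
  show "countable (\<rat> \<inter> {0::real..})" using countable_rat by auto
  fix q :: real
  have "(\<lambda>\<omega>. if \<omega> \<in> X2 q -` G then ennreal (exp (- \<alpha> * q)) else 0) \<in> borel_measurable M"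
    by (intro measurable_If_set measurable_const measurable_sets[OF assms(1) assms(2)]) auto
  then show "(\<lambda>\<omega>. if X2 q \<omega> \<in> G then ennreal (exp (- \<alpha> * q)) else 0) \<in> borel_measurable M" by simp
qed

lemma hit_nonneg: "0 \<le> hitting_time X2 G \<omega>"
  unfolding hitting_time_def by (intro Inf_greatest) auto

lemma hit_le: "0 \<le> t \<Longrightarrow> X2 t \<omega> \<in> G \<Longrightarrow> hitting_time X2 G \<omega> \<le> ereal t"
  unfolding hitting_time_def by (intro Inf_lower) auto

lemma gQ_le_hit:
  assumes a: "\<alpha> > 0"
  shows "gQ \<alpha> X2 G \<omega> \<le> exp_neg \<alpha> (hitting_time X2 G \<omega>)"
  unfolding gQ_def
proof (intro SUP_least)
  fix q :: real assume q: "q \<in> \<rat> \<inter> {0..}"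
  show "(if X2 q \<omega> \<in> G then ennreal (exp (- \<alpha> * q)) else 0) \<le> exp_neg \<alpha> (hitting_time X2 G \<omega>)"
  proof (cases "X2 q \<omega> \<in> G")
    case True
    have le: "hitting_time X2 G \<omega> \<le> ereal q" using hit_le[of q X2 \<omega> G] True q by auto
    have ge: "0 \<le> hitting_time X2 G \<omega>" by (rule hit_nonneg)
    obtain d where d: "hitting_time X2 G \<omega> = ereal d" "0 \<le> d" "d \<le> q"
      using le ge by (cases "hitting_time X2 G \<omega>") auto
    have "exp (- \<alpha> * q) \<le> exp (- \<alpha> * d)" using d a by (simp add: mult_left_mono)
    then show ?thesis using True d by (simp add: exp_neg_def ennreal_leI)
  qed auto
qed

lemma hit_le_gQ:
  fixes X2 :: "real \<Rightarrow> 'w \<Rightarrow> 'a::metric_space"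
  assumes a: "\<alpha> > 0" and G: "open G" and c: "continuous_on {0..} (\<lambda>t. X2 t \<omega>)"
  shows "exp_neg \<alpha> (hitting_time X2 G \<omega>) \<le> gQ \<alpha> X2 G \<omega>"
proof (cases "hitting_time X2 G \<omega> = \<infinity>")
  case True then show ?thesis by (simp add: exp_neg_def)
next
  case False
  obtain d where d: "hitting_time X2 G \<omega> = ereal d" "0 \<le> d"
    using False hit_nonneg[of X2 G \<omega>] by (cases "hitting_time X2 G \<omega>") auto
  have key: "ennreal (exp (- \<alpha> * r)) \<le> gQ \<alpha> X2 G \<omega>" if r: "d < r" for r
  proof -
    have "Inf {ereal t | t. 0 \<le> t \<and> X2 t \<omega> \<in> G} < ereal r"
      using d r unfolding hitting_time_def by simp
    then obtain t where t: "0 \<le> t" "X2 t \<omega> \<in> G" "t < r"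
      by (auto simp: Inf_less_iff)
    obtain \<epsilon> where \<epsilon>: "\<epsilon> > 0" "ball (X2 t \<omega>) \<epsilon> \<subseteq> G"
      using G t(2) open_contains_ball by blast
    obtain \<delta> where \<delta>: "\<delta> > 0" "\<And>s. s \<in> {0..} \<Longrightarrow> dist s t < \<delta> \<Longrightarrow> dist (X2 s \<omega>) (X2 t \<omega>) < \<epsilon>"
      using c t(1) \<epsilon>(1) unfolding continuous_on_iff by (metis atLeast_iff)
    obtain q where q: "q \<in> \<rat>" "t < q" "q < min r (t + \<delta>)"
      using Rats_dense_in_real[of t "min r (t + \<delta>)"] t(3) \<delta>(1) by auto
    have "dist q t < \<delta>" using q by (simp add: dist_real_def)
    then have "X2 q \<omega> \<in> G" using \<delta>(2)[of q] q t(1) \<epsilon>(2) by (auto simp: dist_commute subset_iff)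
    then have "ennreal (exp (- \<alpha> * q)) \<le> gQ \<alpha> X2 G \<omega>"
      unfolding gQ_def using q t(1) by (intro SUP_upper2[of q]) auto
    moreover have "exp (- \<alpha> * r) \<le> exp (- \<alpha> * q)" using q a by (simp add: mult_left_mono)
    ultimately show ?thesis by (meson ennreal_leI order_trans)
  qed
  have lim: "((\<lambda>r. ennreal (exp (- \<alpha> * r))) \<longlongrightarrow> ennreal (exp (- \<alpha> * d))) (at_right d)"
    by (intro tendsto_ennrealI tendsto_intros)
  have "ennreal (exp (- \<alpha> * d)) \<le> gQ \<alpha> X2 G \<omega>"
  proof (rule tendsto_le[OF _ tendsto_const lim])
    show "\<forall>\<^sub>F r in at_right d. ennreal (exp (- \<alpha> * r)) \<le> gQ \<alpha> X2 G \<omega>"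
      by (rule eventually_mono[OF eventually_at_right_less key])
  qed simp
  then show ?thesis using d by (simp add: exp_neg_def)
qed

lemma gQ_tight:
  fixes X2 :: "real \<Rightarrow> 'w \<Rightarrow> 'a::real_normed_vector"
  assumes a: "\<alpha> > 0" and c: "continuous_on {0..} (\<lambda>t. X2 t \<omega>)"
  shows "(INF n. gQ \<alpha> X2 (UNIV - cball 0 (real n)) \<omega>) = 0"
proof -
  have T: "(INF n. gQ \<alpha> X2 (UNIV - cball 0 (real n)) \<omega>) \<le> ennreal (exp (- \<alpha> * T))" if T: "0 \<le> T" for T
  proof -
    have "compact ((\<lambda>t. X2 t \<omega>) ` {0..T})"
      by (rule compact_continuous_image[OF continuous_on_subset[OF c]]) auto
    then obtain B where B: "\<And>t. t \<in> {0..T} \<Longrightarrow> norm (X2 t \<omega>) \<le> B"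
      by (meson bounded_iff compact_imp_bounded image_eqI)
    obtain n :: nat where n: "B \<le> real n" using real_arch_simple by blast
    have "gQ \<alpha> X2 (UNIV - cball 0 (real n)) \<omega> \<le> ennreal (exp (- \<alpha> * T))"
      unfolding gQ_def
    proof (intro SUP_least)
      fix q :: real assume q: "q \<in> \<rat> \<inter> {0..}"
      show "(if X2 q \<omega> \<in> UNIV - cball 0 (real n) then ennreal (exp (- \<alpha> * q)) else 0) \<le> ennreal (exp (- \<alpha> * T))"
      proof (cases "X2 q \<omega> \<in> UNIV - cball 0 (real n)")
        case True
        then have "norm (X2 q \<omega>) > B" using n by auto
        then have "T < q" using B[of q] q by force
        then have "exp (- \<alpha> * q) \<le> exp (- \<alpha> * T)" using a by (simp add: mult_left_mono)
        then show ?thesis using True by (simp add: ennreal_leI)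
      qed auto
    qed
    then show ?thesis by (rule INF_lower2[OF UNIV_I])
  qed
  have "(INF n. gQ \<alpha> X2 (UNIV - cball 0 (real n)) \<omega>) \<le> 0"
  proof (rule ennreal_le_epsilon)
    fix e :: real assume e: "0 < e"
    define T where "T = max 0 (- ln e / \<alpha>)"
    have "- \<alpha> * T \<le> ln e"
      using a unfolding T_def by (auto simp: field_simps max_def)
    then have "exp (- \<alpha> * T) \<le> e" using e by (metis exp_le_cancel_iff exp_ln)
    then show "(INF n. gQ \<alpha> X2 (UNIV - cball 0 (real n)) \<omega>) \<le> 0 + ennreal e"
      using T[of T] unfolding T_def by (simp add: ennreal_leI order_trans)
  qed
  then show ?thesis by simp
qed

lemma nn_integral_bind_le:
  assumes N: "N \<in> measurable M (subprob_algebra B)" and ne: "space M \<noteq> {}"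
    and g: "g \<in> borel_measurable B"
    and ae: "AE x in M. AE y in N x. f y \<le> g y"
  shows "(\<integral>\<^sup>+y. f y \<partial>(M \<bind> N)) \<le> (\<integral>\<^sup>+y. g y \<partial>(M \<bind> N))"
proof -
  have sets: "sets (M \<bind> N) = sets B"
    using sets_kernel[OF N] ne by (intro sets_bind) auto
  show ?thesis
    unfolding nn_integral_def[of _ f]
  proof (intro SUP_least)
    fix s assume s: "s \<in> {s. simple_function (M \<bind> N) s \<and> s \<le> f}"
    then have sm: "s \<in> borel_measurable B"
      using borel_measurable_simple_function[of "M \<bind> N" s] sets by (simp cong: measurable_cong_sets)
    have "integral\<^sup>S (M \<bind> N) s = (\<integral>\<^sup>+y. s y \<partial>(M \<bind> N))"
      using s by (simp add: nn_integral_eq_simple_integral)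
    also have "\<dots> = (\<integral>\<^sup>+x. \<integral>\<^sup>+y. s y \<partial>N x \<partial>M)" by (rule nn_integral_bind[OF sm N])
    also have "\<dots> \<le> (\<integral>\<^sup>+x. \<integral>\<^sup>+y. g y \<partial>N x \<partial>M)"
    proof (rule nn_integral_mono_AE)
      show "AE x in M. (\<integral>\<^sup>+y. s y \<partial>N x) \<le> (\<integral>\<^sup>+y. g y \<partial>N x)"
        using ae
      proof (rule AE_mp, intro AE_I2 impI)
        fix x assume "AE y in N x. f y \<le> g y"
        then have "AE y in N x. s y \<le> g y"
          by (rule AE_mp, intro AE_I2 impI) (use s in \<open>auto dest: le_funD intro: order_trans\<close>)
        then show "(\<integral>\<^sup>+y. s y \<partial>N x) \<le> (\<integral>\<^sup>+y. g y \<partial>N x)" by (rule nn_integral_mono_AE)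
      qed
    qed
    also have "\<dots> = (\<integral>\<^sup>+y. g y \<partial>(M \<bind> N))" by (rule nn_integral_bind[OF g N, symmetric])
    finally show "integral\<^sup>S (M \<bind> N) s \<le> (\<integral>\<^sup>+y. g y \<partial>(M \<bind> N))" .
  qed
qed



lemma max_min_add: "(a'::ennreal) \<le> max a b \<Longrightarrow> c \<le> min a b \<Longrightarrow> a' + c \<le> a + b"
proof -
  assume 1: "a' \<le> max a b" and 2: "c \<le> min a b"
  have "a' + c \<le> max a b + min a b" using 1 2 by (rule add_mono)
  also have "max a b + min a b = a + b" by (cases "a \<le> b") (simp_all add: max_def min_def add.commute)
  finally show ?thesis .
qed

theorem corollary5p6:
  fixes \<mu> :: "real \<Rightarrow> 'a::euclidean_space measure"
    and u :: "real \<Rightarrow> 'a \<Rightarrow> real"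
    and E :: "(real \<times> 'a) set"
    and \<Omega> :: "'w measure"
    and Pk :: "real \<Rightarrow> 'a \<Rightarrow> 'w measure"
    and X1 :: "real \<Rightarrow> 'w \<Rightarrow> real"
    and X2 :: "real \<Rightarrow> 'w \<Rightarrow> 'a"
    and \<alpha> :: real
  assumes mu_prob: "\<And>t. t \<ge> 0 \<Longrightarrow> prob_space (\<mu> t) \<and> sets (\<mu> t) = sets borel"
    and mu_density: "\<And>t. t \<ge> 0 \<Longrightarrow> \<mu> t = density lborel (\<lambda>x. ennreal (u t x))"
    and u_meas: "(\<lambda>(t, x). u t x) \<in> borel_measurable borel"
    and mu_weak: "weakly_continuous_flow \<mu>"
    and E_borel: "E \<in> sets borel"
    and E_full: "\<And>s. s \<ge> 0 \<Longrightarrow> emeasure (\<mu> s) {x. (s, x) \<in> E} = 1"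
    and E_sub: "E \<subseteq> {0..} \<times> UNIV"
    and Pk_prob: "\<And>s x. prob_space (Pk s x) \<and> sets (Pk s x) = sets \<Omega>"
    and Pk_kernel: "\<And>s. s \<ge> 0 \<Longrightarrow> Pk s \<in> measurable borel (subprob_algebra \<Omega>)"
    and X1_meas: "\<And>t. X1 t \<in> measurable \<Omega> borel"
    and X2_meas: "\<And>t. X2 t \<in> measurable \<Omega> borel"
    and X_in_E: "\<And>s x. (s, x) \<in> E \<Longrightarrow>
        AE \<omega> in Pk s x. \<forall>t\<ge>0. (X1 t \<omega>, X2 t \<omega>) \<in> E"
    and X_cont: "\<And>s x. (s, x) \<in> E \<Longrightarrow>
        AE \<omega> in Pk s x. continuous_on {0..} (\<lambda>t. (X1 t \<omega>, X2 t \<omega>))"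
    and X1_time: "\<And>s x t. (s, x) \<in> E \<Longrightarrow> t \<ge> 0 \<Longrightarrow> AE \<omega> in Pk s x. X1 t \<omega> = s + t"
    and X_marg: "\<And>s t. s \<ge> 0 \<Longrightarrow> t \<ge> 0 \<Longrightarrow>
        distr (\<mu> s \<bind> Pk s) borel (X2 t) = \<mu> (s + t)"
    and alpha_pos: "\<alpha> > 0"
  shows "choquet_capacity (cap_alpha \<alpha> (\<mu> 0 \<bind> Pk 0) X2)
       \<and> tight_capacity (cap_alpha \<alpha> (\<mu> 0 \<bind> Pk 0) X2)"
proof -
  define M0 where "M0 = \<mu> 0"
  define P where "P = M0 \<bind> Pk 0"
  have M0p: "prob_space M0" and M0s: "sets M0 = sets borel" using mu_prob[of 0] by (auto simp: M0_def)
  have kern: "Pk 0 \<in> measurable M0 (subprob_algebra \<Omega>)"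
    unfolding measurable_cong_sets[OF M0s refl] using Pk_kernel[of 0] by simp
  have ne: "space M0 \<noteq> {}" using prob_space.not_empty[OF M0p] .
  have Ps: "sets P = sets \<Omega>" unfolding P_def using Pk_prob ne by (intro sets_bind) auto
  have Pp: "prob_space P" unfolding P_def
    by (rule prob_space.prob_space_bind[OF M0p _ kern]) (simp add: Pk_prob)
  have X2P: "X2 q \<in> measurable P borel" for q unfolding measurable_cong_sets[OF Ps refl] using X2_meas[of q] by simp
  have gmP: "open G \<Longrightarrow> (\<lambda>\<omega>. gQ \<alpha> X2 G \<omega>) \<in> borel_measurable P" for G
    by (intro gQ_meas X2P borel_open)
  have gmO: "open G \<Longrightarrow> (\<lambda>\<omega>. gQ \<alpha> X2 G \<omega>) \<in> borel_measurable \<Omega>" for G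
    by (intro gQ_meas X2_meas borel_open)
  define E0 where "E0 = {x. (0::real, x) \<in> E}"
  have pm: "(\<lambda>x::'a. (0::real, x)) \<in> borel_measurable borel"
    by (intro borel_measurable_continuous_onI continuous_intros)
  have "(\<lambda>x::'a. (0::real, x)) -` E \<inter> space borel \<in> sets borel" by (rule measurable_sets[OF pm E_borel])
  then have E0m: "E0 \<in> sets M0" unfolding E0_def M0s by (simp add: vimage_def)
  have AEE: "AE x in M0. (0, x) \<in> E"
  proof -
    have "emeasure M0 E0 = 1" using E_full[of 0] by (simp add: M0_def E0_def)
    then have "AE x in M0. x \<in> E0"
      using prob_space.AE_in_set_eq_1[OF M0p E0m] by (simp add: measure_def)
    then show ?thesis by (simp add: E0_def)
  qed
  have AEc1: "AE \<omega> in Pk 0 x. continuous_on {0..} (\<lambda>t. X2 t \<omega>)" if "(0, x) \<in> E" for x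
    using X_cont[OF that] by (rule eventually_mono) (drule continuous_on_snd, simp)
  have AEc: "AE x in M0. AE \<omega> in Pk 0 x. continuous_on {0..} (\<lambda>t. X2 t \<omega>)"
    by (rule eventually_mono[OF AEE AEc1])
  define \<psi> where "\<psi> G = (\<integral>\<^sup>+\<omega>. gQ \<alpha> X2 G \<omega> \<partial>P)" for G
  have link: "(\<integral>\<^sup>+\<omega>. exp_neg \<alpha> (hitting_time X2 G \<omega>) \<partial>P) = \<psi> G" if G: "open G" for G
  proof (rule antisym)
    show "(\<integral>\<^sup>+\<omega>. exp_neg \<alpha> (hitting_time X2 G \<omega>) \<partial>P) \<le> \<psi> G"
      unfolding \<psi>_def P_def
    proof (rule nn_integral_bind_le[OF kern ne gmO[OF G]])
      show "AE x in M0. AE \<omega> in Pk 0 x. exp_neg \<alpha> (hitting_time X2 G \<omega>) \<le> gQ \<alpha> X2 G \<omega>"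
        using AEc
      proof (rule eventually_mono)
        fix x assume "AE \<omega> in Pk 0 x. continuous_on {0..} (\<lambda>t. X2 t \<omega>)"
        then show "AE \<omega> in Pk 0 x. exp_neg \<alpha> (hitting_time X2 G \<omega>) \<le> gQ \<alpha> X2 G \<omega>"
          by (rule eventually_mono) (rule hit_le_gQ[OF alpha_pos G])
      qed
    qed
    show "\<psi> G \<le> (\<integral>\<^sup>+\<omega>. exp_neg \<alpha> (hitting_time X2 G \<omega>) \<partial>P)"
      unfolding \<psi>_def by (intro nn_integral_mono gQ_le_hit alpha_pos)
  qed
  have cap_eq: "cap_alpha \<alpha> P X2 = (\<lambda>A. INF G\<in>{G. open G \<and> A \<subseteq> G}. \<psi> G)"
    unfolding cap_alpha_def by (intro ext INF_cong) (auto simp: link)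
  have bnd: "\<psi> G \<le> 1" for G
  proof -
    have "\<psi> G \<le> (\<integral>\<^sup>+\<omega>. 1 \<partial>P)" unfolding \<psi>_def by (intro nn_integral_mono gQ_le_1 alpha_pos)
    also have "\<dots> = 1" using prob_space.emeasure_space_1[OF Pp] by simp
    finally show ?thesis .
  qed
  have ssub: "\<psi> (G \<union> H) + \<psi> (G \<inter> H) \<le> \<psi> G + \<psi> H" if "open G" "open H" for G H
  proof -
    have "\<psi> (G \<union> H) + \<psi> (G \<inter> H) = (\<integral>\<^sup>+\<omega>. gQ \<alpha> X2 (G \<union> H) \<omega> + gQ \<alpha> X2 (G \<inter> H) \<omega> \<partial>P)"
      unfolding \<psi>_def using that by (intro nn_integral_add[symmetric] gmP) auto
    also have "\<dots> \<le> (\<integral>\<^sup>+\<omega>. gQ \<alpha> X2 G \<omega> + gQ \<alpha> X2 H \<omega> \<partial>P)"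
    proof (intro nn_integral_mono max_min_add)
      fix \<omega>
      show "gQ \<alpha> X2 (G \<union> H) \<omega> \<le> max (gQ \<alpha> X2 G \<omega>) (gQ \<alpha> X2 H \<omega>)"
        using gQ_union[of \<alpha> X2 G H \<omega>] by (simp add: sup_max)
      show "gQ \<alpha> X2 (G \<inter> H) \<omega> \<le> min (gQ \<alpha> X2 G \<omega>) (gQ \<alpha> X2 H \<omega>)"
        by (intro min.boundedI gQ_mono) auto
    qed
    also have "\<dots> = \<psi> G + \<psi> H"
      unfolding \<psi>_def using that by (intro nn_integral_add gmP) auto
    finally show ?thesis .
  qed
  have cont: "\<psi> (\<Union>n. Gs n) \<le> (SUP n. \<psi> (Gs n))" if "\<And>n. open (Gs n)" "incseq Gs" for Gs
  proof -
    have "\<psi> (\<Union>n. Gs n) \<le> (\<integral>\<^sup>+\<omega>. (SUP n. gQ \<alpha> X2 (Gs n) \<omega>) \<partial>P)"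
      unfolding \<psi>_def by (intro nn_integral_mono gQ_Union)
    also have "\<dots> = (SUP n. \<psi> (Gs n))"
      unfolding \<psi>_def
    proof (rule nn_integral_monotone_convergence_SUP)
      show "incseq (\<lambda>n \<omega>. gQ \<alpha> X2 (Gs n) \<omega>)"
      proof (rule incseq_SucI)
        fix n show "(\<lambda>\<omega>. gQ \<alpha> X2 (Gs n) \<omega>) \<le> (\<lambda>\<omega>. gQ \<alpha> X2 (Gs (Suc n)) \<omega>)"
          by (rule le_funI, rule gQ_mono, rule incseq_SucD[OF that(2)])
      qed
      show "\<And>n. (\<lambda>\<omega>. gQ \<alpha> X2 (Gs n) \<omega>) \<in> borel_measurable P" using that(1) gmP by auto
    qed
    finally show ?thesis .
  qed
  have tight0: "(INF n. \<psi> (UNIV - cball 0 (real n))) = 0"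
  proof -
    define h where "h n \<omega> = gQ \<alpha> X2 (UNIV - cball (0::'a) (real n)) \<omega>" for n \<omega>
    have op: "open (UNIV - cball (0::'a) r)" for r by (intro open_Diff) auto
    have hP: "h n \<in> borel_measurable P" for n unfolding h_def using gmP[OF op] by simp
    have hO: "h n \<in> borel_measurable \<Omega>" for n unfolding h_def using gmO[OF op] by simp
    have dec: "decseq h"
    proof (rule decseq_SucI)
      fix n show "h (Suc n) \<le> h n" unfolding h_def le_fun_def by (auto intro!: gQ_mono)
    qed
    have fin: "(\<integral>\<^sup>+\<omega>. h n \<omega> \<partial>P) < \<infinity>" for n
      using le_less_trans[OF bnd[of "UNIV - cball 0 (real n)"] ennreal_one_less_top]
      unfolding \<psi>_def h_def by simp
    have "(INF n. \<psi> (UNIV - cball 0 (real n))) = (\<integral>\<^sup>+\<omega>. (INF n. h n \<omega>) \<partial>P)"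
      unfolding \<psi>_def h_def[symmetric]
      by (rule nn_integral_monotone_convergence_INF_decseq[OF dec hP fin, symmetric])
    also have "\<dots> = (\<integral>\<^sup>+x. \<integral>\<^sup>+\<omega>. (INF n. h n \<omega>) \<partial>Pk 0 x \<partial>M0)"
      unfolding P_def by (rule nn_integral_bind[OF _ kern]) (use hO in measurable)
    also have "\<dots> = (\<integral>\<^sup>+x. 0 \<partial>M0)"
    proof (rule nn_integral_cong_AE)
      show "AE x in M0. (\<integral>\<^sup>+\<omega>. (INF n. h n \<omega>) \<partial>Pk 0 x) = 0"
        using AEc
      proof (rule eventually_mono)
        fix x assume "AE \<omega> in Pk 0 x. continuous_on {0..} (\<lambda>t. X2 t \<omega>)"
        then have "AE \<omega> in Pk 0 x. (INF n. h n \<omega>) = 0"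
          by (rule eventually_mono) (unfold h_def, rule gQ_tight[OF alpha_pos])
        then have "(\<integral>\<^sup>+\<omega>. (INF n. h n \<omega>) \<partial>Pk 0 x) = (\<integral>\<^sup>+\<omega>. 0 \<partial>Pk 0 x)"
          by (rule nn_integral_cong_AE)
        then show "(\<integral>\<^sup>+\<omega>. (INF n. h n \<omega>) \<partial>Pk 0 x) = 0" by simp
      qed
    qed
    finally show ?thesis by simp
  qed
  have "choquet_capacity (cap_alpha \<alpha> P X2)"
    unfolding cap_eq by (rule cap_choquet[OF bnd ssub cont])
  moreover have "tight_capacity (cap_alpha \<alpha> P X2)"
    unfolding cap_eq by (rule cap_tight[OF tight0])
  ultimately show ?thesis unfolding P_def M0_def by simp
qed

end
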